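(* Let $p\colon X\to B$ be a Boolean set. For an ultrafilter $F$ of $B$ and $a\in X$ with $p(a)\in F$, let $[a]_F$ be the set of $b\in X$ with $p(b)\in F$ for which there exists $c\in X$ with $p(c)\in F$ and $c\le a$, $c\le b$. Then: for every ultrafilter $F$ of $B$ and every $a$ with $p(a)\in F$, the set $[a]_F$ is an ultrafilter of $(X,\le)$; every ultrafilter of $(X,\le)$ is of the form $[a]_F$ for some ultrafilter $F$ of $B$ and some $a$ with $p(a)\in F$; and $[a]_F\cap[b]_F\neq\emptyset$ implies $[a]_F=[b]_F$.
   Context: Convention: a "Boolean algebra" means a generalized Boolean algebra (relatively complemented distributive lattice with $0$). Presheaf of sets over a meet semilattice $E$: pairwise disjoint sets $X_e$, restriction maps $x\mapsto x|^e_f$ for $e\ge f$ with $|^e_e=\mathrm{id}$ and $(x|^e_f)|^f_g=x|^e_g$; $p(x)=e$ iff $x\in X_e$; global support: all $X_e\neq\emptyset$. Order: $x\le y$ iff $p(x)\le p(y)$ and $x=y|^{p(y)}_{p(x)}$. Compatibility $x\sim y$: $x\wedge y$ exists and $p(x\wedge y)=p(x)\wedge p(y)$. A Boolean set is a presheaf $p\colon X\to B$ with global support over a Boolean algebra $B$ such that $(X,\le)$ has least element $0$, compatible pairs have joins, and $p(x)=0\Rightarrow x=0$. In a poset, a filter is a non-empty, down directed, upwardly closed subset; proper if not the whole poset; an ultrafilter is a maximal proper filter. *)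

theory Defs
  imports Main
begin

definition gen_boolean_algebra :: "('b::{distrib_lattice, order_bot}) itself \<Rightarrow> bool" where
  "gen_boolean_algebra _ \<longleftrightarrow>
     (\<forall>a x b::'b. a \<le> x \<and> x \<le> b \<longrightarrow> (\<exists>y. inf x y = a \<and> sup x y = b))"

definition is_filter :: "'a set \<Rightarrow> ('a \<Rightarrow> 'a \<Rightarrow> bool) \<Rightarrow> 'a set \<Rightarrow> bool" where
  "is_filter S le F \<longleftrightarrow>
     F \<subseteq> S \<and> F \<noteq> {} \<and>
     (\<forall>x\<in>F. \<forall>y\<in>F. \<exists>z\<in>F. le z x \<and> le z y) \<and>
     (\<forall>x\<in>F. \<forall>y\<in>S. le x y \<longrightarrow> y \<in> F)"

definition is_proper_filter :: "'a set \<Rightarrow> ('a \<Rightarrow> 'a \<Rightarrow> bool) \<Rightarrow> 'a set \<Rightarrow> bool" where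
  "is_proper_filter S le F \<longleftrightarrow> is_filter S le F \<and> F \<noteq> S"

definition is_ultrafilter :: "'a set \<Rightarrow> ('a \<Rightarrow> 'a \<Rightarrow> bool) \<Rightarrow> 'a set \<Rightarrow> bool" where
  "is_ultrafilter S le F \<longleftrightarrow> is_proper_filter S le F \<and>
     (\<forall>G. is_proper_filter S le G \<and> F \<subseteq> G \<longrightarrow> G = F)"

definition is_meet :: "'a set \<Rightarrow> ('a \<Rightarrow> 'a \<Rightarrow> bool) \<Rightarrow> 'a \<Rightarrow> 'a \<Rightarrow> 'a \<Rightarrow> bool" where
  "is_meet S le x y m \<longleftrightarrow> m \<in> S \<and> le m x \<and> le m y \<and>
     (\<forall>z\<in>S. le z x \<and> le z y \<longrightarrow> le z m)"

definition is_join :: "'a set \<Rightarrow> ('a \<Rightarrow> 'a \<Rightarrow> bool) \<Rightarrow> 'a \<Rightarrow> 'a \<Rightarrow> 'a \<Rightarrow> bool" where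
  "is_join S le x y j \<longleftrightarrow> j \<in> S \<and> le x j \<and> le y j \<and>
     (\<forall>z\<in>S. le x z \<and> le y z \<longrightarrow> le j z)"

text \<open>The total set is the type 'x; p x is the support of x; res x f is the
restriction x|^{p x}_f (only meaningful for f \<le> p x). Disjointness of the
fibres X_e = p^{-1}(e) is automatic.\<close>

definition presheaf :: "('x \<Rightarrow> 'b::semilattice_inf) \<Rightarrow> ('x \<Rightarrow> 'b \<Rightarrow> 'x) \<Rightarrow> bool" where
  "presheaf p res \<longleftrightarrow>
     (\<forall>x f. f \<le> p x \<longrightarrow> p (res x f) = f) \<and>
     (\<forall>x. res x (p x) = x) \<and>
     (\<forall>x f g. g \<le> f \<and> f \<le> p x \<longrightarrow> res (res x f) g = res x g)"

definition global_support :: "('x \<Rightarrow> 'b) \<Rightarrow> bool" where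
  "global_support p \<longleftrightarrow> (\<forall>e. \<exists>x. p x = e)"

definition psh_le :: "('x \<Rightarrow> 'b::semilattice_inf) \<Rightarrow> ('x \<Rightarrow> 'b \<Rightarrow> 'x) \<Rightarrow> 'x \<Rightarrow> 'x \<Rightarrow> bool" where
  "psh_le p res x y \<longleftrightarrow> p x \<le> p y \<and> x = res y (p x)"

definition compatible :: "('x \<Rightarrow> 'b::semilattice_inf) \<Rightarrow> ('x \<Rightarrow> 'b \<Rightarrow> 'x) \<Rightarrow> 'x \<Rightarrow> 'x \<Rightarrow> bool" where
  "compatible p res x y \<longleftrightarrow>
     (\<exists>m. is_meet UNIV (psh_le p res) x y m \<and> p m = inf (p x) (p y))"

definition boolean_set :: "('x \<Rightarrow> 'b::{distrib_lattice, order_bot}) \<Rightarrow> ('x \<Rightarrow> 'b \<Rightarrow> 'x) \<Rightarrow> bool" where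
  "boolean_set p res \<longleftrightarrow>
     gen_boolean_algebra TYPE('b) \<and> presheaf p res \<and> global_support p \<and>
     (\<exists>z. (\<forall>x. psh_le p res z x) \<and> (\<forall>x. p x = bot \<longrightarrow> x = z)) \<and>
     (\<forall>x y. compatible p res x y \<longrightarrow> (\<exists>j. is_join UNIV (psh_le p res) x y j))"

definition uclass :: "('x \<Rightarrow> 'b::semilattice_inf) \<Rightarrow> ('x \<Rightarrow> 'b \<Rightarrow> 'x) \<Rightarrow> 'b set \<Rightarrow> 'x \<Rightarrow> 'x set" where
  "uclass p res F a = {b. p b \<in> F \<and> (\<exists>c. p c \<in> F \<and> psh_le p res c a \<and> psh_le p res c b)}"

end

theory Submission imports Defs begin

lemma pl_refl: "presheaf p res \<Longrightarrow> psh_le p res x x"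
  by (simp add: presheaf_def psh_le_def)

lemma pl_trans: assumes "presheaf p res" "psh_le p res x y" "psh_le p res y w" shows "psh_le p res x w"
proof -
  have h: "\<And>x f g. g \<le> f \<Longrightarrow> f \<le> p x \<Longrightarrow> res (res x f) g = res x g" using assms(1) unfolding presheaf_def by blast
  have a: "p x \<le> p y" "x = res y (p x)" "p y \<le> p w" "y = res w (p y)" using assms(2,3) unfolding psh_le_def by auto
  then have "x = res w (p x)" using h[of "p x" "p y" w] by simp
  then show ?thesis using a unfolding psh_le_def by auto
qed

lemma pl_antisym: assumes "presheaf p res" "psh_le p res x y" "psh_le p res y x" shows "x = y"
proof -
  have "p x = p y" using assms(2,3) unfolding psh_le_def by auto
  moreover have "res y (p y) = y" using assms(1) unfolding presheaf_def by blast
  ultimately show ?thesis using assms(2) unfolding psh_le_def by auto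
qed

lemma p_res: "presheaf p res \<Longrightarrow> f \<le> p x \<Longrightarrow> p (res x f) = f"
  unfolding presheaf_def by blast

lemma pl_res: "presheaf p res \<Longrightarrow> f \<le> p x \<Longrightarrow> psh_le p res (res x f) x"
  using p_res[of p res f x] unfolding psh_le_def by simp

lemma pl_R: assumes "presheaf p res" "psh_le p res u y" "f \<le> p u" shows "psh_le p res (res y f) u"
proof -
  have h: "\<And>x f g. g \<le> f \<Longrightarrow> f \<le> p x \<Longrightarrow> res (res x f) g = res x g"
    and q: "\<And>x f. f \<le> p x \<Longrightarrow> p (res x f) = f" using assms(1) unfolding presheaf_def by blast+
  have a: "p u \<le> p y" "u = res y (p u)" using assms(2) unfolding psh_le_def by auto
  have "res u f = res y f" using h[of f "p u" y] a assms(3) by simp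
  moreover have "p (res y f) = f" using q[of f y] a assms(3) by simp
  ultimately show ?thesis using assms(3) unfolding psh_le_def by simp
qed

lemma pl_p: "psh_le p res x y \<Longrightarrow> p x \<le> p y"
  by (simp add: psh_le_def)

lemma filter_inf: fixes F :: "'b::semilattice_inf set" shows "is_filter UNIV (\<le>) F \<Longrightarrow> x \<in> F \<Longrightarrow> y \<in> F \<Longrightarrow> inf x y \<in> F"
  proof -
  assume a: "is_filter UNIV (\<le>) F" "x \<in> F" "y \<in> F"
  then obtain z where "z \<in> F" "z \<le> x" "z \<le> y" unfolding is_filter_def by blast
  then have "z \<le> inf x y" by simp
  then show ?thesis using a(1) \<open>z \<in> F\<close> unfolding is_filter_def by blast
qed

lemma filter_up: "is_filter S le F \<Longrightarrow> x \<in> F \<Longrightarrow> y \<in> S \<Longrightarrow> le x y \<Longrightarrow> y \<in> F"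
  unfolding is_filter_def by blast

lemma filter_dir: "is_filter S le F \<Longrightarrow> x \<in> F \<Longrightarrow> y \<in> F \<Longrightarrow> \<exists>z\<in>F. le z x \<and> le z y"
  unfolding is_filter_def by blast

lemma filter_least: "is_filter UNIV le F \<Longrightarrow> z \<in> F \<Longrightarrow> \<forall>x. le z x \<Longrightarrow> F = UNIV"
  unfolding is_filter_def by blast

lemma uf_split:
  fixes F :: "'b::{distrib_lattice,order_bot} set"
  assumes "is_ultrafilter UNIV (\<le>) F" "q \<notin> F"
  shows "\<exists>f\<in>F. inf f q = bot"
proof -
  have fF: "is_filter UNIV (\<le>) F" using assms(1) by (simp add: is_ultrafilter_def is_proper_filter_def)
  define G where "G = {x. \<exists>f\<in>F. inf f q \<le> x}"
  have "is_filter UNIV (\<le>) G"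
    unfolding is_filter_def
  proof (intro conjI ballI impI)
    show "G \<noteq> {}" using fF unfolding G_def is_filter_def by auto
  next
    fix x y assume "x \<in> G" "y \<in> G"
    then obtain f1 f2 where "f1 \<in> F" "f2 \<in> F" "inf f1 q \<le> x" "inf f2 q \<le> y" unfolding G_def by auto
    note h = this
    have "inf (inf f1 f2) q \<le> inf f1 q" "inf (inf f1 f2) q \<le> inf f2 q"
      by (meson inf_le1 inf_le2 inf_mono order_refl order_trans)+
    then have "inf (inf f1 f2) q \<le> x" "inf (inf f1 f2) q \<le> y" using h(3,4) order_trans by blast+
    moreover have "inf (inf f1 f2) q \<in> G" unfolding G_def using filter_inf[OF fF h(1,2)] by blast
    ultimately show "\<exists>z\<in>G. z \<le> x \<and> z \<le> y" by blast
  next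
    fix x y assume "x \<in> G" "y \<in> UNIV" "x \<le> y" then show "y \<in> G" unfolding G_def by (auto intro: order_trans)
  qed auto
  moreover have "F \<subseteq> G" unfolding G_def using inf_le1 by blast
  moreover have "q \<in> G" using fF unfolding G_def is_filter_def by auto
  ultimately have "\<not> is_proper_filter UNIV (\<le>) G" using assms unfolding is_ultrafilter_def by blast
  then have "bot \<in> G" using \<open>is_filter UNIV (\<le>) G\<close> unfolding is_proper_filter_def by auto
  then show ?thesis unfolding G_def using bot_unique by blast
qed


lemma res_comp: assumes "presheaf p res" "psh_le p res w y" "f \<le> p w" shows "res w f = res y f"
proof -
  have h: "\<And>x f g. g \<le> f \<Longrightarrow> f \<le> p x \<Longrightarrow> res (res x f) g = res x g"
    using assms(1) unfolding presheaf_def by blast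
  have a: "p w \<le> p y" "w = res y (p w)" using assms(2) unfolding psh_le_def by auto
  show ?thesis using h[of f "p w" y] a assms(3) by simp
qed

lemma cls_mem: "b \<in> uclass p res F a \<longleftrightarrow> p b \<in> F \<and> (\<exists>c. p c \<in> F \<and> psh_le p res c a \<and> psh_le p res c b)"
  by (simp add: uclass_def)

lemma cls_sym: "p a \<in> F \<Longrightarrow> b \<in> uclass p res F a \<Longrightarrow> a \<in> uclass p res F b"
  unfolding cls_mem by blast

lemma cls_sub:
  fixes p :: "'x \<Rightarrow> 'b::semilattice_inf"
  assumes ps: "presheaf p res" and fF: "is_filter UNIV (\<le>) F" and pa: "p a \<in> F"
    and b: "b \<in> uclass p res F a"
  shows "uclass p res F b \<subseteq> uclass p res F a"
proof
  fix x assume "x \<in> uclass p res F b"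
  then obtain c where c: "p x \<in> F" "p c \<in> F" "psh_le p res c b" "psh_le p res c x" unfolding cls_mem by blast
  obtain c' where c': "p c' \<in> F" "psh_le p res c' a" "psh_le p res c' b" using b unfolding cls_mem by blast
  define f where "f = inf (p c) (p c')"
  have fF': "f \<in> F" unfolding f_def using filter_inf[OF fF c(2) c'(1)] .
  have w1: "psh_le p res (res b f) c" using pl_R[OF ps c(3)] unfolding f_def by simp
  have w2: "psh_le p res (res b f) c'" using pl_R[OF ps c'(3)] unfolding f_def by simp
  have pw: "p (res b f) = f" using p_res[OF ps] pl_p[OF c(3)] unfolding f_def by (meson inf_le1 order_trans)
  show "x \<in> uclass p res F a" unfolding cls_mem
    using c(1) fF' pw pl_trans[OF ps w2 c'(2)] pl_trans[OF ps w1 c(4)] by metis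
qed

lemma uclass_uf:
  fixes p :: "'x \<Rightarrow> 'b::{distrib_lattice,order_bot}"
  assumes ps: "presheaf p res" and zl: "\<forall>x. psh_le p res z x" and zb: "\<forall>x. p x = bot \<longrightarrow> x = z"
    and pz: "p z = bot"
    and uf: "is_ultrafilter UNIV (\<le>) F" and pa: "p a \<in> F"
  shows "is_ultrafilter UNIV (psh_le p res) (uclass p res F a)"
proof -
  have fF: "is_filter UNIV (\<le>) F" and FU: "F \<noteq> UNIV" using uf by (auto simp: is_ultrafilter_def is_proper_filter_def)
  have botF: "bot \<notin> F" using filter_least[OF fF, of bot] FU bot_least by blast
  have aa: "a \<in> uclass p res F a" unfolding cls_mem using pa pl_refl[OF ps] by blast
  have filt: "is_filter UNIV (psh_le p res) (uclass p res F a)"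
    unfolding is_filter_def
  proof (intro conjI ballI impI)
    show "uclass p res F a \<noteq> {}" using aa by blast
  next
    fix b1 b2 assume "b1 \<in> uclass p res F a" "b2 \<in> uclass p res F a"
    then obtain c1 c2 where c: "p c1 \<in> F" "psh_le p res c1 a" "psh_le p res c1 b1"
       "p c2 \<in> F" "psh_le p res c2 a" "psh_le p res c2 b2" unfolding cls_mem by blast
    define f where "f = inf (p c1) (p c2)"
    have fF': "f \<in> F" unfolding f_def using filter_inf[OF fF c(1) c(4)] .
    have d1: "psh_le p res (res a f) c1" using pl_R[OF ps c(2)] unfolding f_def by simp
    have d2: "psh_le p res (res a f) c2" using pl_R[OF ps c(5)] unfolding f_def by simp
    have da: "psh_le p res (res a f) a" using pl_trans[OF ps d1 c(2)] .
    have pd: "p (res a f) = f" using pl_p[OF da] p_res[OF ps] by (metis pl_p[OF c(2)] f_def inf_le1 order_trans)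
    have "res a f \<in> uclass p res F a" unfolding cls_mem using pd fF' da pl_refl[OF ps] by metis
    then show "\<exists>z\<in>uclass p res F a. psh_le p res z b1 \<and> psh_le p res z b2"
      using pl_trans[OF ps d1 c(3)] pl_trans[OF ps d2 c(6)] by blast
  next
    fix b y assume "b \<in> uclass p res F a" "y \<in> UNIV" "psh_le p res b y"
    then show "y \<in> uclass p res F a" unfolding cls_mem
      using filter_up[OF fF _ _ pl_p] pl_trans[OF ps] by (metis UNIV_I)
  qed auto
  have zn: "z \<notin> uclass p res F a" using botF pz unfolding cls_mem by auto
  have propf: "is_proper_filter UNIV (psh_le p res) (uclass p res F a)"
    using filt zn unfolding is_proper_filter_def by auto
  show ?thesis unfolding is_ultrafilter_def
  proof (intro conjI allI impI propf)
    fix G assume G: "is_proper_filter UNIV (psh_le p res) G \<and> uclass p res F a \<subseteq> G"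
    have fG: "is_filter UNIV (psh_le p res) G" and GU: "G \<noteq> UNIV" using G by (auto simp: is_proper_filter_def)
    have zG: "z \<notin> G" using filter_least[OF fG] zl GU by blast
    have "G \<subseteq> uclass p res F a"
    proof
      fix y assume y: "y \<in> G"
      have aG: "a \<in> G" using aa G by blast
      obtain w where w: "w \<in> G" "psh_le p res w a" "psh_le p res w y" using filter_dir[OF fG aG y] by blast
      show "y \<in> uclass p res F a"
      proof (cases "p w \<in> F")
        case True
        have "p y \<in> F" using filter_up[OF fF True _ pl_p[OF w(3)]] by simp
        then show ?thesis unfolding cls_mem using True w pl_refl[OF ps] by blast
      next
        case False
        obtain f where f: "f \<in> F" "inf f (p w) = bot" using uf_split[OF uf False] by blast
        define e where "e = inf f (p a)"
        have eF: "e \<in> F" unfolding e_def using filter_inf[OF fF f(1) pa] .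
        have ra: "psh_le p res (res a e) a" using pl_res[OF ps] e_def by simp
        have pr: "p (res a e) = e" using p_res[OF ps] e_def by simp
        have "res a e \<in> uclass p res F a" unfolding cls_mem using pr eF ra pl_refl[OF ps] by metis
        then have rG: "res a e \<in> G" using G by blast
        obtain u where u: "u \<in> G" "psh_le p res u w" "psh_le p res u (res a e)"
          using filter_dir[OF fG w(1) rG] by blast
        have "p u \<le> p w" "p u \<le> e" using pl_p[OF u(2)] pl_p[OF u(3)] pr by auto
        then have "p u \<le> inf f (p w)" unfolding e_def by (simp add: le_infI1)
        then have "p u = bot" using f(2) by (metis bot_unique)
        then have "u = z" using zb by blast
        then show ?thesis using u(1) zG by blast
      qed
    qed
    then show "G = uclass p res F a" using G by blast
  qed
qed


lemma uf_repr:
  fixes p :: "'x \<Rightarrow> 'b::{distrib_lattice,order_bot}"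
  assumes ps: "presheaf p res" and zl: "\<forall>x. psh_le p res z x" and zb: "\<forall>x. p x = bot \<longrightarrow> x = z"
    and pz: "p z = bot"
    and uU: "is_ultrafilter UNIV (psh_le p res) U"
  shows "\<exists>F a. is_ultrafilter UNIV (\<le>) F \<and> p a \<in> F \<and> U = uclass p res F a"
proof -
  have fU: "is_filter UNIV (psh_le p res) U" and UU: "U \<noteq> UNIV"
    using uU by (auto simp: is_ultrafilter_def is_proper_filter_def)
  have zU: "z \<notin> U" using filter_least[OF fU] zl UU by blast
  obtain a where aU: "a \<in> U" using fU unfolding is_filter_def by blast
  define F where "F = {e. \<exists>u\<in>U. p u \<le> e}"
  have paF: "p a \<in> F" using aU unfolding F_def by blast
  have fF: "is_filter UNIV (\<le>) F"
    unfolding is_filter_def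
  proof (intro conjI ballI impI)
    show "F \<noteq> {}" using paF by blast
  next
    fix x y assume "x \<in> F" "y \<in> F"
    then obtain u1 u2 where u: "u1 \<in> U" "u2 \<in> U" "p u1 \<le> x" "p u2 \<le> y" unfolding F_def by blast
    obtain w where w: "w \<in> U" "psh_le p res w u1" "psh_le p res w u2" using filter_dir[OF fU u(1,2)] by blast
    have "p w \<le> x" "p w \<le> y" using pl_p[OF w(2)] pl_p[OF w(3)] u(3,4) by auto
    moreover have "p w \<in> F" unfolding F_def using w(1) by blast
    ultimately show "\<exists>z\<in>F. z \<le> x \<and> z \<le> y" by blast
  next
    fix x y assume "x \<in> F" "y \<in> UNIV" "x \<le> y"
    then obtain u where "u \<in> U" "p u \<le> x" unfolding F_def by blast
    then show "y \<in> F" unfolding F_def using \<open>x \<le> y\<close> order_trans by blast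
  qed auto
  have botF: "bot \<notin> F"
  proof
    assume "bot \<in> F"
    then obtain u where "u \<in> U" "p u \<le> bot" unfolding F_def by blast
    then have "p u = bot" by (simp add: bot_unique)
    then have "u = z" using zb by blast
    then show False using \<open>u \<in> U\<close> zU by blast
  qed
  have ufF: "is_ultrafilter UNIV (\<le>) F" unfolding is_ultrafilter_def
  proof (intro conjI allI impI)
    show "is_proper_filter UNIV (\<le>) F" using fF botF unfolding is_proper_filter_def by blast
  next
    fix G assume G: "is_proper_filter UNIV (\<le>) G \<and> F \<subseteq> G"
    have fG: "is_filter UNIV (\<le>) G" and GU: "G \<noteq> UNIV" using G by (auto simp: is_proper_filter_def)
    have botG: "bot \<notin> G" using filter_least[OF fG, of bot] GU bot_least by blast
    define G' where "G' = {y. \<exists>u\<in>U. \<exists>e\<in>G. e \<le> p u \<and> psh_le p res (res u e) y}"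
    have UG': "U \<subseteq> G'"
    proof
      fix u assume "u \<in> U"
      moreover have "p u \<in> G" using \<open>u \<in> U\<close> G unfolding F_def by blast
      moreover have "res u (p u) = u" using ps unfolding presheaf_def by blast
      moreover have "psh_le p res (res u (p u)) u" using calculation(3) pl_refl[OF ps, of u] by simp
      moreover have "p u \<le> p u" by simp
      ultimately show "u \<in> G'" unfolding G'_def by blast
    qed
    have fG': "is_filter UNIV (psh_le p res) G'"
      unfolding is_filter_def
    proof (intro conjI ballI impI)
      show "G' \<noteq> {}" using UG' aU by blast
    next
      fix y1 y2 assume "y1 \<in> G'" "y2 \<in> G'"
      then obtain u1 e1 u2 e2 where h: "u1 \<in> U" "e1 \<in> G" "e1 \<le> p u1" "psh_le p res (res u1 e1) y1"
        "u2 \<in> U" "e2 \<in> G" "e2 \<le> p u2" "psh_le p res (res u2 e2) y2" unfolding G'_def by blast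
      obtain w where w: "w \<in> U" "psh_le p res w u1" "psh_le p res w u2" using filter_dir[OF fU h(1,5)] by blast
      have pwG: "p w \<in> G" using w(1) G unfolding F_def by blast
      define f where "f = inf (inf e1 e2) (p w)"
      have fG1: "f \<in> G" unfolding f_def using filter_inf[OF fG filter_inf[OF fG h(2,6)] pwG] .
      have fw: "f \<le> p w" unfolding f_def by simp
      have f1: "f \<le> e1" and f2: "f \<le> e2" unfolding f_def by (auto intro: le_infI1)
      have t1: "res w f = res u1 f" using res_comp[OF ps w(2) fw] .
      have t2: "res w f = res u2 f" using res_comp[OF ps w(3) fw] .
      have r1: "psh_le p res (res u1 f) (res u1 e1)"
        using pl_R[OF ps pl_res[OF ps h(3)]] p_res[OF ps h(3)] f1 by simp
      have r2: "psh_le p res (res u2 f) (res u2 e2)"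
        using pl_R[OF ps pl_res[OF ps h(7)]] p_res[OF ps h(7)] f2 by simp
      have "res w f \<in> G'" unfolding G'_def using w(1) fG1 fw pl_refl[OF ps] by blast
      moreover have "psh_le p res (res w f) y1" using pl_trans[OF ps r1 h(4)] t1 by simp
      moreover have "psh_le p res (res w f) y2" using pl_trans[OF ps r2 h(8)] t2 by simp
      ultimately show "\<exists>z\<in>G'. psh_le p res z y1 \<and> psh_le p res z y2" by blast
    next
      fix x y assume "x \<in> G'" "y \<in> UNIV" "psh_le p res x y"
      then obtain u e where "u \<in> U" "e \<in> G" "e \<le> p u" "psh_le p res (res u e) x" unfolding G'_def by blast
      moreover have "psh_le p res (res u e) y" using pl_trans[OF ps \<open>psh_le p res (res u e) x\<close> \<open>psh_le p res x y\<close>] .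
      ultimately show "y \<in> G'" unfolding G'_def by blast
    qed auto
    have zG': "z \<notin> G'"
    proof
      assume "z \<in> G'"
      then obtain u e where "u \<in> U" "e \<in> G" "e \<le> p u" "psh_le p res (res u e) z" unfolding G'_def by blast
      note hh = this
      have "p (res u e) = e" using p_res[OF ps hh(3)] .
      then have "e \<le> bot" using pl_p[OF hh(4)] pz by simp
      then have "e = bot" by (simp add: bot_unique)
      then show False using \<open>e \<in> G\<close> botG by simp
    qed
    have "is_proper_filter UNIV (psh_le p res) G'" using fG' zG' unfolding is_proper_filter_def by blast
    moreover have "\<forall>H. is_proper_filter UNIV (psh_le p res) H \<and> U \<subseteq> H \<longrightarrow> H = U"
      using uU unfolding is_ultrafilter_def by blast
    ultimately have G'U: "G' = U" using UG' by blast
    have "G \<subseteq> F"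
    proof
      fix g assume "g \<in> G"
      have "p a \<in> G" using paF G by blast
      define e where "e = inf g (p a)"
      have eG: "e \<in> G" unfolding e_def using filter_inf[OF fG \<open>g \<in> G\<close> \<open>p a \<in> G\<close>] .
      have ea: "e \<le> p a" unfolding e_def by simp
      have "res a e \<in> G'" unfolding G'_def using aU eG ea pl_refl[OF ps] by blast
      then have "res a e \<in> U" using G'U by simp
      moreover have "p (res a e) \<le> g" using p_res[OF ps ea] unfolding e_def by simp
      ultimately show "g \<in> F" unfolding F_def by blast
    qed
    then show "G = F" using G by blast
  qed
  have sub: "U \<subseteq> uclass p res F a"
  proof
    fix y assume "y \<in> U"
    obtain w where w: "w \<in> U" "psh_le p res w a" "psh_le p res w y" using filter_dir[OF fU aU \<open>y \<in> U\<close>] by blast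
    have "p w \<in> F" "p y \<in> F" unfolding F_def using w(1) \<open>y \<in> U\<close> by blast+
    then show "y \<in> uclass p res F a" unfolding cls_mem using w by blast
  qed
  have "is_ultrafilter UNIV (psh_le p res) (uclass p res F a)" using uclass_uf[OF ps zl zb pz ufF paF] .
  then have "is_proper_filter UNIV (psh_le p res) (uclass p res F a)" unfolding is_ultrafilter_def by blast
  then have "uclass p res F a = U" using uU sub unfolding is_ultrafilter_def by blast
  then show ?thesis using ufF paF by blast
qed

theorem proposition3p6:
  fixes p :: "'x \<Rightarrow> 'b::{distrib_lattice, order_bot}" and res :: "'x \<Rightarrow> 'b \<Rightarrow> 'x"
  assumes "boolean_set p res"
  shows "(\<forall>F a. is_ultrafilter UNIV (\<le>) F \<and> p a \<in> F \<longrightarrow>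
              is_ultrafilter UNIV (psh_le p res) (uclass p res F a))
       \<and> (\<forall>U. is_ultrafilter UNIV (psh_le p res) U \<longrightarrow>
              (\<exists>F a. is_ultrafilter UNIV (\<le>) F \<and> p a \<in> F \<and> U = uclass p res F a))
       \<and> (\<forall>F a b. is_ultrafilter UNIV (\<le>) F \<and> p a \<in> F \<and> p b \<in> F \<and>
              uclass p res F a \<inter> uclass p res F b \<noteq> {} \<longrightarrow>
              uclass p res F a = uclass p res F b)"
proof -
  have ps: "presheaf p res" using assms unfolding boolean_set_def by blast
  obtain z where zl: "\<forall>x. psh_le p res z x" and zb: "\<forall>x. p x = bot \<longrightarrow> x = z"
    using assms unfolding boolean_set_def by blast
  obtain x0 where "p x0 = bot" using assms unfolding boolean_set_def global_support_def by blast
  then have pz: "p z = bot" using zb by blast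
  have part3: "uclass p res F a = uclass p res F b"
    if F: "is_ultrafilter UNIV (\<le>) F" and pa: "p a \<in> F" and pb: "p b \<in> F"
      and ne: "uclass p res F a \<inter> uclass p res F b \<noteq> {}" for F a b
  proof -
    have fF: "is_filter UNIV (\<le>) F" using F by (auto simp: is_ultrafilter_def is_proper_filter_def)
    obtain d where da: "d \<in> uclass p res F a" and db: "d \<in> uclass p res F b" using ne by blast
    have pd: "p d \<in> F" using da unfolding cls_mem by blast
    have "uclass p res F d \<subseteq> uclass p res F a" using cls_sub[OF ps fF pa da] .
    moreover have "uclass p res F a \<subseteq> uclass p res F d" using cls_sub[OF ps fF pd cls_sym[OF pa da]] .
    moreover have "uclass p res F d \<subseteq> uclass p res F b" using cls_sub[OF ps fF pb db] .
    moreover have "uclass p res F b \<subseteq> uclass p res F d" using cls_sub[OF ps fF pd cls_sym[OF pb db]] .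
    ultimately show ?thesis by blast
  qed
  show ?thesis
    using uclass_uf[OF ps zl zb pz] uf_repr[OF ps zl zb pz] part3 by blast
qed

end
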